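(* Let $\Gamma=(G,\sigma)$ be a signed graph with $G=(V,E)$, and let $\Gamma'=(G',\sigma)$, where $G'=(V',E')$ is the induced subgraph of $G$ obtained by removing $k$ vertices from $G$. If $G'$ has a minimum edge cover of cardinality $\beta'$, then $$L_{\beta'+k+1}(\Gamma)\ \ge\ \frac12\,\frac{w_{\min}}{\mu_{\max}}>0,$$ where $w_{\min}:=\min_{e\in E}w_e$ and $\mu_{\max}:=\max_{i\in V}\mu_i$.
   Context: $G=(V,E)$ is a finite undirected graph without self-loops (isolated vertices allowed), $V=\{1,\dots,n\}$. An edge cover is a set of edges such that every vertex is incident to one of them. A signed graph $\Gamma=(G,\sigma)$ has signature $\sigma:E\to\{\pm1\}$, edge weight $w:E\to(0,\infty)$, vertex measure $\mu:V\to(0,\infty)$, potential $\kappa:V\to\mathbb R$. For $p\ge1$ and nonzero $f$, $\mathcal R_p^\sigma(f)=\frac{\sum_{\{i,j\}\in E}w_{ij}|f(i)-\sigma_{ij}f(j)|^p+\sum_i\kappa_i|f(i)|^p}{\sum_i\mu_i|f(i)|^p}$; $\mathcal S_p=\{f:\sum_i\mu_i|f(i)|^p=1\}$; Krasnoselskii genus $\gamma(B)$ of closed symmetric $B\subset\mathbb R^n\setminus\{0\}$: least $k$ with an odd continuous map $B\to\mathbb R^k\setminus\{0\}$; $\mathcal F_k(\mathcal S_p)$ = closed symmetric $B\subset\mathcal S_p$ with $\gamma(B)\ge k$; $\lambda_k^{(p)}=\min_{B\in\mathcal F_k(\mathcal S_p)}\max_{f\in B}\mathcal R_p^\sigma(f)$.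 Cut-off adjacency eigenvalues: $L_k(\Gamma):=\lim_{p\to\infty}2^{-p}\lambda_k^{(p)}(\Gamma)$ (limits exist, independent of $\kappa$). *)

theory Defs
  imports "HOL-Analysis.Analysis"
begin

text \<open>Vertices are the elements of a finite type 'n (so V = UNIV, |V| = CARD('n));
  functions on V are vectors in real^'n.\<close>

definition is_edge_set :: "'n set set \<Rightarrow> bool" where
  "is_edge_set E \<longleftrightarrow> (\<forall>e\<in>E. card e = 2)"

text \<open>For an edge e = {i,j}: |f(i) - sigma_e f(j)|^p, written symmetrically
  (the expression is symmetric in i,j since sigma_e = +-1).\<close>
definition edge_term :: "(('n::finite) set \<Rightarrow> real) \<Rightarrow> real \<Rightarrow> real^'n \<Rightarrow> 'n set \<Rightarrow> real" where
  "edge_term \<sigma> p f e = (\<Sum>i\<in>e. \<Sum>j\<in>e - {i}. \<bar>f$i - \<sigma> e * f$j\<bar> powr p) / 2"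

definition rayleigh ::
  "('n::finite) set set \<Rightarrow> ('n set \<Rightarrow> real) \<Rightarrow> ('n set \<Rightarrow> real) \<Rightarrow> ('n \<Rightarrow> real) \<Rightarrow> ('n \<Rightarrow> real)
   \<Rightarrow> real \<Rightarrow> (real^'n) \<Rightarrow> real" where
  "rayleigh E \<sigma> w \<mu> \<kappa> p f =
     ((\<Sum>e\<in>E. w e * edge_term \<sigma> p f e) + (\<Sum>i\<in>UNIV. \<kappa> i * \<bar>f$i\<bar> powr p))
     / (\<Sum>i\<in>UNIV. \<mu> i * \<bar>f$i\<bar> powr p)"

definition p_sphere :: "(('n::finite) \<Rightarrow> real) \<Rightarrow> real \<Rightarrow> (real^'n) set" where
  "p_sphere \<mu> p = {f. (\<Sum>i\<in>UNIV. \<mu> i * \<bar>f$i\<bar> powr p) = 1}"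

text \<open>Krasnoselskii genus: gamma(B) >= k iff there is no m < k and odd continuous
  map B -> R^m \ {0}; such a map is given by its m real components g 0, ..., g (m-1).\<close>
definition genus_ge :: "(real^('n::finite)) set \<Rightarrow> nat \<Rightarrow> bool" where
  "genus_ge B k \<longleftrightarrow>
     \<not> (\<exists>m<k. \<exists>g :: nat \<Rightarrow> real^'n \<Rightarrow> real.
           (\<forall>i<m. continuous_on B (g i) \<and> (\<forall>x\<in>B. g i (- x) = - g i x))
         \<and> (\<forall>x\<in>B. \<exists>i<m. g i x \<noteq> 0))"

definition genus_family :: "(('n::finite) \<Rightarrow> real) \<Rightarrow> real \<Rightarrow> nat \<Rightarrow> (real^'n) set set" where
  "genus_family \<mu> p k =
     {B. B \<subseteq> p_sphere \<mu> p \<and> closed B \<and> (\<forall>x\<in>B. - x \<in> B) \<and> genus_ge B k}"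

text \<open>Variational eigenvalue lambda_k^(p) (min-max, as Inf/Sup in ereal; Inf {} = \<infinity>).\<close>
definition var_eig ::
  "('n::finite) set set \<Rightarrow> ('n set \<Rightarrow> real) \<Rightarrow> ('n set \<Rightarrow> real) \<Rightarrow> ('n \<Rightarrow> real) \<Rightarrow> ('n \<Rightarrow> real)
   \<Rightarrow> real \<Rightarrow> nat \<Rightarrow> ereal" where
  "var_eig E \<sigma> w \<mu> \<kappa> p k =
     (INF B\<in>genus_family \<mu> p k. SUP f\<in>B. ereal (rayleigh E \<sigma> w \<mu> \<kappa> (p::real) (f :: real^'n)))"

definition cutoff_eig ::
  "('n::finite) set set \<Rightarrow> ('n set \<Rightarrow> real) \<Rightarrow> ('n set \<Rightarrow> real) \<Rightarrow> ('n \<Rightarrow> real) \<Rightarrow> ('n \<Rightarrow> real)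
   \<Rightarrow> nat \<Rightarrow> ereal" where
  "cutoff_eig E \<sigma> w \<mu> \<kappa> k =
     Lim at_top (\<lambda>p::real. ereal (2 powr (- p)) * var_eig E \<sigma> w \<mu> (\<kappa>::'n \<Rightarrow> real) p k)"

definition edge_cover :: "'n set \<Rightarrow> 'n set set \<Rightarrow> 'n set set \<Rightarrow> bool" where
  "edge_cover V E C \<longleftrightarrow> C \<subseteq> E \<and> (\<forall>v\<in>V. \<exists>e\<in>C. v \<in> e)"

definition min_edge_cover :: "'n set \<Rightarrow> 'n set set \<Rightarrow> 'n set set \<Rightarrow> bool" where
  "min_edge_cover V E C \<longleftrightarrow> edge_cover V E C \<and>
     (\<forall>C'. edge_cover V E C' \<longrightarrow> card C \<le> card C')"

end

theory Submission imports Defs "HOL-Real_Asymp.Real_Asymp" begin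

lemma amgm_powr:
  fixes x r :: real assumes "0 \<le> x" "0 \<le> r" "r \<le> 1"
  shows "x powr r \<le> r * x + (1 - r)"
proof (cases "x = 0")
  case True then show ?thesis using assms by simp
next
  case False
  then have "x powr r * 1 powr (1 - r) \<le> r * x + (1 - r) * 1"
    using assms by (intro Youngs_inequality_0) auto
  then show ?thesis by simp
qed

lemma concave2_powr:
  fixes a b r :: real assumes "0 \<le> a" "0 \<le> b" "0 < r" "r \<le> 1"
  shows "a powr r + b powr r \<le> 2 powr (1 - r) * (a + b) powr r"
proof (cases "a + b = 0")
  case True then have "a = 0" "b = 0" using assms by auto
  then show ?thesis by simp
next
  case False
  define m where "m = (a + b) / 2"
  have m: "m > 0" using False assms by (simp add: m_def)
  have ha: "(a/m) powr r \<le> r * (a/m) + (1 - r)"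
    using assms m by (intro amgm_powr) auto
  have hb: "(b/m) powr r \<le> r * (b/m) + (1 - r)"
    using assms m by (intro amgm_powr) auto
  have "a powr r + b powr r = m powr r * ((a/m) powr r + (b/m) powr r)"
    using assms m by (simp add: powr_divide distrib_left)
  also have "\<dots> \<le> m powr r * (r * (a/m) + (1 - r) + (r * (b/m) + (1 - r)))"
    using ha hb by (intro mult_left_mono) auto
  also have "r * (a/m) + (1 - r) + (r * (b/m) + (1 - r)) = 2"
  proof -
    have "(a+b)/m = 2" using m by (simp add: divide_eq_eq m_def)
    then have h2: "a/m + b/m = 2" by (simp add: add_divide_distrib)
    have "r * (a/m) + (1 - r) + (r * (b/m) + (1 - r)) = r * (a/m + b/m) + 2 - 2 * r"
      by (simp add: algebra_simps)
    then show ?thesis using h2 by simp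
  qed
  also have "m powr r * 2 = 2 powr (1 - r) * (a + b) powr r"
    using assms by (simp add: m_def powr_divide powr_diff)
  finally show ?thesis .
qed

lemma subadd_powr:
  fixes a b r :: real assumes "0 \<le> a" "0 \<le> b" "0 < r" "r \<le> 1"
  shows "(a + b) powr r \<le> a powr r + b powr r"
proof (cases "a + b = 0")
  case True then have "a = 0" "b = 0" using assms by auto
  then show ?thesis by simp
next
  case False
  define s where "s = a + b"
  have s: "s > 0" using False assms by (simp add: s_def)
  have ha: "a / s \<le> (a/s) powr r"
    using powr_mono'[of r 1 "a/s"] assms s by (simp add: s_def)
  have hb: "b / s \<le> (b/s) powr r"
    using powr_mono'[of r 1 "b/s"] assms s by (simp add: s_def)
  have "a/s + b/s = (a+b)/s" by (simp add: add_divide_distrib)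
  also have "(a+b)/s = 1" using s unfolding s_def by simp
  finally have "(a + b) powr r = s powr r * (a/s + b/s)" unfolding s_def by simp
  also have "\<dots> \<le> s powr r * ((a/s) powr r + (b/s) powr r)"
    using ha hb by (intro mult_left_mono) auto
  also have "\<dots> = a powr r + b powr r"
    using assms s by (simp add: powr_divide distrib_left)
  finally show ?thesis .
qed

definition phi :: "real \<Rightarrow> real \<Rightarrow> real" where
  "phi r x = max x 0 powr r - max (- x) 0 powr r"

lemma phi_odd: "phi r (- x) = - phi r x"
  by (simp add: phi_def)

lemma phi_abs: "\<bar>phi r x\<bar> = \<bar>x\<bar> powr r"
  by (cases "x \<ge> 0") (auto simp: phi_def max_def)

lemma phi_sign: "phi r (s * x) = s * phi r x" if "s = 1 \<or> s = -1"
  using that by (auto simp: phi_odd)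

lemma phi_inv: assumes "r > 0" shows "phi (1/r) (phi r x) = x"
proof (cases "x \<ge> 0")
  case True
  then have "phi r x = x powr r" by (simp add: phi_def max_def)
  moreover have "(x powr r) powr (1/r) = x" using True assms by (simp add: powr_powr)
  ultimately show ?thesis using True by (simp add: phi_def max_def)
next
  case False
  then have "phi r x = - ((-x) powr r)" by (simp add: phi_def max_def)
  moreover have "((-x) powr r) powr (1/r) = -x" using False assms by (simp add: powr_powr)
  ultimately show ?thesis using False by (simp add: phi_def max_def)
qed

lemma phi_cont: assumes "r > 0" shows "continuous_on UNIV (phi r)"
  unfolding phi_def using assms
  by (intro continuous_intros continuous_on_powr') auto

lemma phi_holder:
  fixes u v r :: real assumes "0 < r" "r \<le> 1"
  shows "\<bar>phi r u - phi r v\<bar> \<le> 2 powr (1 - r) * \<bar>u - v\<bar> powr r"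
proof -
  have one: "1 \<le> 2 powr (1 - r)" using assms powr_mono[of 0 "1-r" 2] by simp
  have same: "\<bar>x powr r - y powr r\<bar> \<le> 2 powr (1 - r) * \<bar>x - y\<bar> powr r"
    if "0 \<le> x" "0 \<le> y" for x y :: real
  proof -
    have "\<bar>x powr r - y powr r\<bar> \<le> \<bar>x - y\<bar> powr r"
    proof (cases "x \<ge> y")
      case True
      have "((x - y) + y) powr r \<le> (x - y) powr r + y powr r"
        using True that assms by (intro subadd_powr) auto
      moreover have "y powr r \<le> x powr r" using True that assms by (intro powr_mono2) auto
      ultimately show ?thesis using True by simp
    next
      case False
      have "((y - x) + x) powr r \<le> (y - x) powr r + x powr r"
        using False that assms by (intro subadd_powr) auto
      moreover have "x powr r \<le> y powr r" using False that assms by (intro powr_mono2) auto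
      ultimately show ?thesis using False by simp
    qed
    also have "\<dots> \<le> 2 powr (1 - r) * \<bar>x - y\<bar> powr r"
      using one by (simp add: mult_le_cancel_right1)
    finally show ?thesis .
  qed
  have opp: "x powr r + y powr r \<le> 2 powr (1 - r) * (x + y) powr r"
    if "0 \<le> x" "0 \<le> y" for x y :: real
    using concave2_powr that assms by auto
  show ?thesis
  proof (cases "u \<ge> 0")
    case u: True
    show ?thesis
    proof (cases "v \<ge> 0")
      case True then show ?thesis using u same[of u v] by (simp add: phi_def max_def)
    next
      case False
      then have "\<bar>u - v\<bar> = u + (-v)" using u by simp
      then show ?thesis using u False opp[of u "-v"] by (simp add: phi_def max_def)
    qed
  next
    case u: False
    show ?thesis
    proof (cases "v \<ge> 0")
      case True
      then have "\<bar>u - v\<bar> = v + (-u)" using u by simp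
      moreover have "\<bar>- ((- u) powr r) - v powr r\<bar> = v powr r + (- u) powr r"
        by (smt (verit) powr_ge_zero)
      ultimately show ?thesis using u True opp[of v "-u"] by (simp add: phi_def max_def)
    next
      case False then show ?thesis using u same[of "-u" "-v"]
        by (simp add: phi_def max_def abs_minus_commute)
    qed
  qed
qed


definition T :: "real \<Rightarrow> real^'n \<Rightarrow> real^'n" where
  "T r f = (\<chi> i. phi r (f$i))"

lemma T_nth[simp]: "T r f $ i = phi r (f $ i)"
  by (simp add: T_def)

lemma T_odd: "T r (- f) = - T r f"
  by (simp add: vec_eq_iff phi_odd)

lemma T_inv: "r > 0 \<Longrightarrow> T (1/r) (T r f) = f"
  by (simp add: vec_eq_iff phi_inv)

lemma T_cont: fixes A :: "(real^'n::finite) set"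
  assumes "r > 0" shows "continuous_on A (T r :: real^'n \<Rightarrow> real^'n)"
proof -
  have "continuous_on A (\<lambda>f::real^'n. \<chi> i. phi r (f$i))"
  proof (intro continuous_on_vec_lambda)
    fix i
    have "continuous_on A (\<lambda>f::real^'n. f $ i)"
      by (intro continuous_on_component continuous_on_id)
    then show "continuous_on A (\<lambda>f::real^'n. phi r (f $ i))"
      using continuous_on_compose2[OF phi_cont[OF assms]] by blast
  qed
  then show ?thesis by (simp add: T_def[abs_def])
qed

lemma T_image_eq: assumes "r > 0" shows "T r ` B = T (1/r) -` B"
proof
  show "T r ` B \<subseteq> T (1/r) -` B" using T_inv[OF assms] by auto
next
  show "T (1/r) -` B \<subseteq> T r ` B"
  proof
    fix g assume "g \<in> T (1/r) -` B"
    moreover have "T r (T (1/r) g) = g" using T_inv[of "1/r" g] assms by simp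
    ultimately show "g \<in> T r ` B" by (metis imageI vimageE)
  qed
qed

lemma T_closed: assumes "r > 0" "closed B" shows "closed (T r ` B)"
proof -
  have "closed (T (1/r) -` B)" using closed_vimage[OF assms(2) T_cont[of "1/r" UNIV]] assms by simp
  moreover have "T r ` B = T (1/r) -` B" by (rule T_image_eq[OF assms(1)])
  ultimately show ?thesis by simp
qed

lemma T_sphere:
  assumes "p > 0" "q > 0" "f \<in> p_sphere \<mu> p"
  shows "T (p/q) f \<in> p_sphere \<mu> q"
proof -
  have "\<bar>phi (p/q) x\<bar> powr q = \<bar>x\<bar> powr p" for x
    using assms by (simp add: phi_abs powr_powr)
  then show ?thesis using assms(3) by (simp add: p_sphere_def)
qed

lemma genus_transport:
  fixes B :: "(real^'n::finite) set" and h :: "real^'n \<Rightarrow> real^'n"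
  assumes "genus_ge B m" "continuous_on B h" "\<forall>x\<in>B. h (- x) = - h x"
  shows "genus_ge (h ` B) m"
  unfolding genus_ge_def
proof
  assume "\<exists>m'<m. \<exists>g :: nat \<Rightarrow> real^'n \<Rightarrow> real.
           (\<forall>i<m'. continuous_on (h ` B) (g i) \<and> (\<forall>x\<in>h ` B. g i (- x) = - g i x))
         \<and> (\<forall>x\<in>h ` B. \<exists>i<m'. g i x \<noteq> 0)"
  then show False
  proof (elim exE conjE)
  fix m' :: nat and g :: "nat \<Rightarrow> real^'n \<Rightarrow> real" assume m': "m' < m"
    and g1: "\<forall>i<m'. continuous_on (h ` B) (g i) \<and> (\<forall>x\<in>h ` B. g i (- x) = - g i x)"
    and g2: "\<forall>x\<in>h ` B. \<exists>i<m'. g i x \<noteq> 0"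
  define g' where "g' = (\<lambda>i x. g i (h x))"
  have c: "continuous_on B (g' i)" if "i < m'" for i
  proof -
    have "continuous_on (h ` B) (g i)" using g1 that by blast
    then have "continuous_on B (g i \<circ> h)" by (rule continuous_on_compose[OF assms(2)])
    then show ?thesis by (simp add: g'_def comp_def)
  qed
  have o: "g' i (- x) = - g' i x" if "i < m'" "x \<in> B" for i x
  proof -
    have hx: "h x \<in> h ` B" using that(2) by (rule imageI)
    have "h (- x) = - h x" using assms(3) that(2) by blast
    moreover have "g i (- h x) = - g i (h x)"
      using g1 that(1) hx by blast
    ultimately show ?thesis by (simp add: g'_def)
  qed
  have nz: "\<exists>i<m'. g' i x \<noteq> 0" if "x \<in> B" for x
  proof -
    have hx: "h x \<in> h ` B" using that by (rule imageI)
    then show ?thesis using g2 unfolding g'_def by blast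
  qed
  have "(\<forall>i<m'. continuous_on B (g' i) \<and> (\<forall>x\<in>B. g' i (- x) = - g' i x))
         \<and> (\<forall>x\<in>B. \<exists>i<m'. g' i x \<noteq> 0)" using c o nz by blast
  then have "\<exists>g :: nat \<Rightarrow> real^'n \<Rightarrow> real. (\<forall>i<m'. continuous_on B (g i) \<and> (\<forall>x\<in>B. g i (- x) = - g i x))
         \<and> (\<forall>x\<in>B. \<exists>i<m'. g i x \<noteq> 0)" by (rule exI[of _ g'])
  then have "\<exists>m'<m. \<exists>g :: nat \<Rightarrow> real^'n \<Rightarrow> real.
           (\<forall>i<m'. continuous_on B (g i) \<and> (\<forall>x\<in>B. g i (- x) = - g i x))
         \<and> (\<forall>x\<in>B. \<exists>i<m'. g i x \<noteq> 0)"
    using m' by blast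
  then show False using assms(1) unfolding genus_ge_def by blast
  qed
qed

lemma family_transport:
  assumes "p > 0" "q > 0" "B \<in> genus_family \<mu> p m"
  shows "T (p/q) ` B \<in> genus_family \<mu> q m"
proof -
  have r: "p/q > 0" using assms by simp
  from assms(3) have B: "B \<subseteq> p_sphere \<mu> p" "closed B" "\<forall>x\<in>B. - x \<in> B" "genus_ge B m"
    by (auto simp: genus_family_def)
  have "T (p/q) ` B \<subseteq> p_sphere \<mu> q" using B(1) T_sphere[OF assms(1,2)] by auto
  moreover have "closed (T (p/q) ` B)" using T_closed[OF r B(2)] .
  moreover have "\<forall>x\<in>T (p/q) ` B. - x \<in> T (p/q) ` B"
    using B(3) by (auto simp: T_odd[symmetric])
  moreover have "genus_ge (T (p/q) ` B) m"
    using genus_transport[OF B(4) T_cont[OF r]] by (simp add: T_odd)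
  ultimately show ?thesis by (simp add: genus_family_def)
qed


lemma pointwise_bound:
  fixes a b s p q :: real
  assumes "0 < p" "p \<le> q" "s = 1 \<or> s = -1"
  shows "\<bar>phi (p/q) a - s * phi (p/q) b\<bar> powr q \<le> 2 powr (q - p) * \<bar>a - s * b\<bar> powr p"
proof -
  define r where "r = p/q"
  have r: "0 < r" "r \<le> 1" using assms by (auto simp: r_def)
  have "\<bar>phi r a - s * phi r b\<bar> = \<bar>phi r a - phi r (s * b)\<bar>" using phi_sign[OF assms(3)] by simp
  also have "\<dots> \<le> 2 powr (1 - r) * \<bar>a - s * b\<bar> powr r" using phi_holder[OF r] .
  finally have "\<bar>phi r a - s * phi r b\<bar> powr q \<le> (2 powr (1 - r) * \<bar>a - s * b\<bar> powr r) powr q"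
    using assms by (intro powr_mono2) auto
  also have "\<dots> = 2 powr ((1 - r) * q) * \<bar>a - s * b\<bar> powr (r * q)"
    by (simp add: powr_mult powr_powr)
  finally have h: "\<bar>phi r a - s * phi r b\<bar> powr q \<le> 2 powr ((1 - r) * q) * \<bar>a - s * b\<bar> powr (r * q)" .
  have "(1 - r) * q = q - p" "r * q = p" using assms by (auto simp: r_def field_simps)
  then show ?thesis using h by (simp add: r_def)
qed

lemma edge_bound:
  assumes "0 < p" "p \<le> q" "\<sigma> e = 1 \<or> \<sigma> e = -1"
  shows "edge_term \<sigma> q (T (p/q) f) e \<le> 2 powr (q - p) * edge_term \<sigma> p f e"
proof -
  have "(\<Sum>i\<in>e. \<Sum>j\<in>e - {i}. \<bar>T (p/q) f$i - \<sigma> e * T (p/q) f$j\<bar> powr q)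
     \<le> (\<Sum>i\<in>e. \<Sum>j\<in>e - {i}. 2 powr (q - p) * \<bar>f$i - \<sigma> e * f$j\<bar> powr p)"
    using pointwise_bound[OF assms] by (intro sum_mono) simp
  then show ?thesis by (simp add: edge_term_def sum_distrib_left)
qed

lemma kappa_bound:
  assumes "\<forall>i. \<mu> i > 0" "f \<in> p_sphere \<mu> p"
  shows "\<bar>\<Sum>i\<in>UNIV. \<kappa> i * \<bar>f$i\<bar> powr p\<bar> \<le> (\<Sum>i\<in>UNIV. \<bar>\<kappa> i\<bar> / \<mu> i)"
proof -
  define M where "M = (\<Sum>i\<in>UNIV. \<bar>\<kappa> i\<bar> / \<mu> i)"
  have M: "\<bar>\<kappa> i\<bar> / \<mu> i \<le> M" for i
    unfolding M_def using assms(1) by (intro member_le_sum) (auto intro: divide_nonneg_pos)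
  have "\<bar>\<Sum>i\<in>UNIV. \<kappa> i * \<bar>f$i\<bar> powr p\<bar> \<le> (\<Sum>i\<in>UNIV. \<bar>\<kappa> i * \<bar>f$i\<bar> powr p\<bar>)"
    by (rule sum_abs)
  also have "\<dots> \<le> (\<Sum>i\<in>UNIV. M * (\<mu> i * \<bar>f$i\<bar> powr p))"
  proof (intro sum_mono)
    fix i
    have "\<bar>\<kappa> i * \<bar>f$i\<bar> powr p\<bar> = (\<bar>\<kappa> i\<bar> / \<mu> i) * (\<mu> i * \<bar>f$i\<bar> powr p)"
      using assms(1)[rule_format, of i] by (simp add: abs_mult)
    also have "\<dots> \<le> M * (\<mu> i * \<bar>f$i\<bar> powr p)"
      using M[of i] assms(1)[rule_format, of i] by (intro mult_right_mono) auto
    finally show "\<bar>\<kappa> i * \<bar>f$i\<bar> powr p\<bar> \<le> M * (\<mu> i * \<bar>f$i\<bar> powr p)" .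
  qed
  also have "\<dots> = M" using assms(2) by (simp add: p_sphere_def sum_distrib_left[symmetric])
  finally show ?thesis by (simp add: M_def)
qed

lemma rayleigh_sphere:
  "f \<in> p_sphere \<mu> p \<Longrightarrow> rayleigh E \<sigma> w \<mu> \<kappa> p f =
     (\<Sum>e\<in>E. w e * edge_term \<sigma> p f e) + (\<Sum>i\<in>UNIV. \<kappa> i * \<bar>f$i\<bar> powr p)"
  by (simp add: rayleigh_def p_sphere_def)

lemma lin_aux: "(x::real) \<le> a * y \<Longrightarrow> (1 - a) * z \<le> c \<Longrightarrow> x + z \<le> a * (y + z) + c"
  by (simp add: algebra_simps)

lemma rayleigh_bound:
  fixes E :: "('n::finite) set set"
  assumes "\<forall>e\<in>E. \<sigma> e = 1 \<or> \<sigma> e = -1" "\<forall>e\<in>E. w e > 0" "\<forall>i. \<mu> i > 0"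
    and "0 < p" "p \<le> q" "f \<in> p_sphere \<mu> p"
  shows "rayleigh E \<sigma> w \<mu> \<kappa> q (T (p/q) f) \<le> 2 powr (q - p) * rayleigh E \<sigma> w \<mu> \<kappa> p f
           + (2 powr (q - p) - 1) * (\<Sum>i\<in>UNIV. \<bar>\<kappa> i\<bar> / \<mu> i)"
proof -
  define a where "a = 2 powr (q - p)"
  define Kp where "Kp = (\<Sum>i\<in>UNIV. \<kappa> i * \<bar>f$i\<bar> powr p)"
  define M where "M = (\<Sum>i\<in>UNIV. \<bar>\<kappa> i\<bar> / \<mu> i)"
  have a1: "a \<ge> 1" using assms powr_mono[of 0 "q-p" 2] by (simp add: a_def)
  have q: "q > 0" using assms by simp
  have Tf: "T (p/q) f \<in> p_sphere \<mu> q" using T_sphere[OF assms(4) q assms(6)] .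
  have KT: "(\<Sum>i\<in>UNIV. \<kappa> i * \<bar>T (p/q) f$i\<bar> powr q) = Kp"
    using assms q by (simp add: Kp_def phi_abs powr_powr)
  have KM: "\<bar>Kp\<bar> \<le> M" unfolding Kp_def M_def using kappa_bound[OF assms(3,6)] .
  have "(\<Sum>e\<in>E. w e * edge_term \<sigma> q (T (p/q) f) e) \<le> (\<Sum>e\<in>E. w e * (a * edge_term \<sigma> p f e))"
  proof (intro sum_mono mult_left_mono)
    fix e assume "e \<in> E"
    then show "edge_term \<sigma> q (T (p/q) f) e \<le> a * edge_term \<sigma> p f e"
      using assms(1) edge_bound[OF assms(4,5), of \<sigma> e f] unfolding a_def by blast
    show "0 \<le> w e" if "e \<in> E" for e using assms(2) that by auto
  qed
  also have "\<dots> = a * (\<Sum>e\<in>E. w e * edge_term \<sigma> p f e)"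
    by (simp add: sum_distrib_left mult.left_commute)
  finally have Eb: "(\<Sum>e\<in>E. w e * edge_term \<sigma> q (T (p/q) f) e) \<le> a * (\<Sum>e\<in>E. w e * edge_term \<sigma> p f e)" .
  have "(1 - a) * Kp \<le> (a - 1) * M"
  proof -
    have "(1 - a) * Kp = (a - 1) * (- Kp)" by (simp add: algebra_simps)
    also have "\<dots> \<le> (a - 1) * \<bar>Kp\<bar>" using a1 by (intro mult_left_mono) auto
    finally have "(1 - a) * Kp \<le> (a - 1) * \<bar>Kp\<bar>" .
    also have "\<dots> \<le> (a - 1) * M" using a1 KM by (intro mult_left_mono) auto
    finally show ?thesis .
  qed
  then have "(\<Sum>e\<in>E. w e * edge_term \<sigma> q (T (p/q) f) e) + Kp \<le> a * ((\<Sum>e\<in>E. w e * edge_term \<sigma> p f e) + Kp) + (a - 1) * M"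
    using Eb lin_aux by blast
  then show ?thesis
    unfolding rayleigh_sphere[OF Tf] rayleigh_sphere[OF assms(6)] KT
    unfolding a_def M_def Kp_def .
qed


lemma edge_tight:
  assumes "\<sigma> {a,b} = 1 \<or> \<sigma> {a,b} = -1" "a \<noteq> b" "f$a + \<sigma> {a,b} * f$b = 0"
  shows "edge_term \<sigma> p f {a,b} = 2 powr p * \<bar>f$a\<bar> powr p"
proof -
  define s where "s = \<sigma> {a,b}"
  have s: "s = 1 \<or> s = -1" using assms(1) by (simp add: s_def)
  have fa: "f$a = - s * f$b" using assms(3) by (simp add: s_def algebra_simps)
  have h1: "f$a - s * f$b = 2 * f$a" using fa by simp
  have h2: "f$b - s * f$a = 2 * f$b" using fa s by auto
  have h3: "\<bar>f$b\<bar> = \<bar>f$a\<bar>" using fa s by auto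
  have "edge_term \<sigma> p f {a,b} = (\<bar>f$a - s * f$b\<bar> powr p + \<bar>f$b - s * f$a\<bar> powr p) / 2"
    using assms(2) by (simp add: edge_term_def s_def insert_Diff_if)
  also have "\<dots> = 2 powr p * \<bar>f$a\<bar> powr p"
    unfolding h1 h2 using h3 by (simp add: abs_mult powr_mult)
  finally show ?thesis .
qed


definition epair :: "'n set \<Rightarrow> 'n \<times> 'n" where
  "epair e = (SOME ab. e = {fst ab, snd ab} \<and> fst ab \<noteq> snd ab)"

lemma epair: assumes "card e = 2"
  shows "e = {fst (epair e), snd (epair e)} \<and> fst (epair e) \<noteq> snd (epair e)"
proof -
  obtain x y where "e = {x, y}" "x \<noteq> y" using assms card_2_iff by metis
  then have "\<exists>ab. e = {fst ab, snd ab} \<and> fst ab \<noteq> snd ab" by (intro exI[of _ "(x,y)"]) auto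
  then show ?thesis unfolding epair_def by (rule someI_ex)
qed

lemma lower_bound_point:
  fixes E :: "('n::finite) set set" and f :: "real^'n"
  assumes edges: "is_edge_set E" and sig: "\<forall>e\<in>E. \<sigma> e = 1 \<or> \<sigma> e = -1"
    and wpos: "\<forall>e\<in>E. w e > 0" and mupos: "\<forall>i. \<mu> i > 0"
    and cov: "edge_cover (UNIV - K) {e\<in>E. e \<subseteq> UNIV - K} C"
    and fs: "f \<in> p_sphere \<mu> p"
    and fK: "\<forall>v\<in>K. f$v = 0"
    and fC: "\<forall>e\<in>C. f$(fst (epair e)) + \<sigma> e * f$(snd (epair e)) = 0"
  shows "rayleigh E \<sigma> w \<mu> \<kappa> p f \<ge> 2 powr p * (Min (w ` E) / (2 * Max (range \<mu>))) - (\<Sum>i\<in>UNIV. \<bar>\<kappa> i\<bar> / \<mu> i)"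
proof -
  define A where "A e = \<bar>f$(fst (epair e))\<bar> powr p" for e
  define wm where "wm = Min (w ` E)"
  define mm where "mm = Max (range \<mu>)"
  have CE: "C \<subseteq> E" using cov by (auto simp: edge_cover_def)
  have finE: "finite E" by simp
  have finC: "finite C" by simp
  have card2: "card e = 2" if "e \<in> C" for e using CE that edges by (auto simp: is_edge_set_def)
  have ep: "e = {fst (epair e), snd (epair e)}" "fst (epair e) \<noteq> snd (epair e)" if "e \<in> C" for e
    using epair[OF card2[OF that]] by auto
  have Anonneg: "A e \<ge> 0" for e by (simp add: A_def)
  have Av: "\<bar>f$v\<bar> powr p = A e" if "e \<in> C" "v \<in> e" for e v
  proof -
    let ?a = "fst (epair e)" and ?b = "snd (epair e)"
    have s: "\<sigma> e = 1 \<or> \<sigma> e = -1" using sig CE that(1) by auto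
    have z: "f$?a + \<sigma> e * f$?b = 0" using fC that(1) by auto
    have "\<bar>f$?b\<bar> = \<bar>f$?a\<bar>" using s z by (auto simp: algebra_simps)
    moreover have "v = ?a \<or> v = ?b" using ep[OF that(1)] that(2) by blast
    ultimately show ?thesis unfolding A_def by auto
  qed
  have edgeC: "edge_term \<sigma> p f e = 2 powr p * A e" if "e \<in> C" for e
  proof -
    let ?a = "fst (epair e)" and ?b = "snd (epair e)"
    have s: "\<sigma> {?a, ?b} = 1 \<or> \<sigma> {?a, ?b} = -1" using sig CE that ep[OF that] by auto
    have z: "f$?a + \<sigma> {?a, ?b} * f$?b = 0" using fC that ep[OF that] by auto
    have "edge_term \<sigma> p f {?a, ?b} = 2 powr p * \<bar>f$?a\<bar> powr p"
      using edge_tight[of \<sigma> ?a ?b f p] s ep(2)[OF that] z by blast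
    then show ?thesis using ep[OF that] by (simp add: A_def)
  qed
  have edge_nonneg: "edge_term \<sigma> p f e \<ge> 0" for e
    by (simp add: edge_term_def sum_nonneg)
  have wm: "w e \<ge> wm" if "e \<in> C" for e
    unfolding wm_def using that CE by (intro Min_le) auto
  have mm: "\<mu> v \<le> mm" for v unfolding mm_def by (intro Max_ge) auto
  have mmpos: "mm > 0" using mm[of undefined] mupos by (meson less_le_trans)
  have vb: "\<bar>f$v\<bar> powr p \<le> (\<Sum>e\<in>C. if v \<in> e then A e else 0)" for v
  proof (cases "v \<in> K")
    case True then show ?thesis using fK Anonneg by (simp add: sum_nonneg)
  next
    case False
    then have "v \<in> UNIV - K" by simp
    then obtain e where e: "e \<in> C" "v \<in> e" using cov unfolding edge_cover_def by blast
    have "\<bar>f$v\<bar> powr p = (if v \<in> e then A e else 0)" using Av[OF e] e by simp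
    also have "\<dots> \<le> (\<Sum>e\<in>C. if v \<in> e then A e else 0)"
      using e Anonneg by (intro member_le_sum[OF e(1)]) auto
    finally show ?thesis .
  qed
  have "1 = (\<Sum>v\<in>UNIV. \<mu> v * \<bar>f$v\<bar> powr p)" using fs by (simp add: p_sphere_def)
  also have "\<dots> \<le> (\<Sum>v\<in>UNIV. mm * (\<Sum>e\<in>C. if v \<in> e then A e else 0))"
  proof (intro sum_mono)
    fix v
    have "\<mu> v * \<bar>f$v\<bar> powr p \<le> mm * \<bar>f$v\<bar> powr p" using mm[of v] by (intro mult_right_mono) auto
    also have "\<dots> \<le> mm * (\<Sum>e\<in>C. if v \<in> e then A e else 0)" using vb[of v] mmpos by (intro mult_left_mono) auto
    finally show "\<mu> v * \<bar>f$v\<bar> powr p \<le> mm * (\<Sum>e\<in>C. if v \<in> e then A e else 0)" .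
  qed
  also have "\<dots> = mm * (\<Sum>e\<in>C. \<Sum>v\<in>UNIV. if v \<in> e then A e else 0)"
    by (simp add: sum_distrib_left[symmetric] sum.swap[of _ UNIV C])
  also have "(\<Sum>e\<in>C. \<Sum>v\<in>UNIV. if v \<in> e then A e else 0) = (\<Sum>e\<in>C. 2 * A e)"
  proof (intro sum.cong refl)
    fix e assume "e \<in> C"
    have "(\<Sum>v\<in>UNIV. if v \<in> e then A e else 0) = (\<Sum>v\<in>e. A e)"
      by (simp add: sum.If_cases)
    also have "\<dots> = 2 * A e" using card2[OF \<open>e \<in> C\<close>] by simp
    finally show "(\<Sum>v\<in>UNIV. if v \<in> e then A e else 0) = 2 * A e" .
  qed
  finally have D: "1 \<le> mm * (\<Sum>e\<in>C. 2 * A e)" .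
  have SA: "(\<Sum>e\<in>C. A e) \<ge> 1 / (2 * mm)"
  proof -
    have "(\<Sum>e\<in>C. 2 * A e) = 2 * (\<Sum>e\<in>C. A e)" by (rule sum_distrib_left[symmetric])
    then have "mm * (\<Sum>e\<in>C. 2 * A e) = 2 * mm * (\<Sum>e\<in>C. A e)" by simp
    with D have "1 \<le> 2 * mm * (\<Sum>e\<in>C. A e)" by (rule ord_le_eq_trans)
    then show ?thesis using mmpos by (simp add: field_simps)
  qed
  have wmnn: "wm \<ge> 0" if ne: "C \<noteq> {}"
  proof -
    obtain e where "e \<in> C" using ne by blast
    then have "E \<noteq> {}" using CE by blast
    then have "0 < Min (w ` E)" using wpos by (subst Min_gr_iff) auto
    then show ?thesis by (simp add: wm_def)
  qed
  have "(\<Sum>e\<in>E. w e * edge_term \<sigma> p f e) \<ge> (\<Sum>e\<in>C. w e * edge_term \<sigma> p f e)"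
    using CE wpos edge_nonneg by (intro sum_mono2) (auto intro: mult_nonneg_nonneg less_imp_le)
  moreover have "(\<Sum>e\<in>C. w e * edge_term \<sigma> p f e) \<ge> (\<Sum>e\<in>C. wm * (2 powr p * A e))"
    using wm Anonneg edgeC by (intro sum_mono) (auto intro: mult_right_mono)
  moreover have "(\<Sum>e\<in>C. wm * (2 powr p * A e)) = wm * 2 powr p * (\<Sum>e\<in>C. A e)"
    by (simp add: sum_distrib_left mult.assoc)
  moreover have "wm * 2 powr p * (\<Sum>e\<in>C. A e) \<ge> 2 powr p * (wm / (2 * mm))"
  proof (cases "C = {}")
    case True then show ?thesis using SA mmpos by simp
  next
    case False
    have "wm * 2 powr p * (\<Sum>e\<in>C. A e) \<ge> wm * 2 powr p * (1 / (2 * mm))"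
      using SA wmnn[OF False] by (intro mult_left_mono) auto
    moreover have "wm * 2 powr p * (1 / (2 * mm)) = 2 powr p * (wm / (2 * mm))" by simp
    ultimately show ?thesis by linarith
  qed
  ultimately have Eb: "(\<Sum>e\<in>E. w e * edge_term \<sigma> p f e) \<ge> 2 powr p * (wm / (2 * mm))" by linarith
  have KM: "\<bar>\<Sum>i\<in>UNIV. \<kappa> i * \<bar>f$i\<bar> powr p\<bar> \<le> (\<Sum>i\<in>UNIV. \<bar>\<kappa> i\<bar> / \<mu> i)"
    using kappa_bound[OF mupos fs] .
  show ?thesis using Eb KM unfolding rayleigh_sphere[OF fs] wm_def mm_def by linarith
qed


lemma genus_point:
  fixes B :: "(real^'n::finite) set" and C :: "'n set set"
  assumes gen: "genus_ge B (card C + card K + 1)"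
  shows "\<exists>f\<in>B. (\<forall>v\<in>K. f$v = 0) \<and> (\<forall>e\<in>C. f$(fst (epair e)) + \<sigma> e * f$(snd (epair e)) = 0)"
proof (rule ccontr)
  assume nex: "\<not> ?thesis"
  obtain kk where kk: "bij_betw kk {0..<card K} K" using ex_bij_betw_nat_finite[of K] by auto
  obtain cc where cc: "bij_betw cc {0..<card C} C" using ex_bij_betw_nat_finite[of C] by auto
  define g :: "nat \<Rightarrow> real^'n \<Rightarrow> real" where
    "g i x = (if i < card K then x $ kk i
              else x $ fst (epair (cc (i - card K))) + \<sigma> (cc (i - card K)) * x $ snd (epair (cc (i - card K))))"
    for i x
  define m' where "m' = card K + card C"
  have c: "continuous_on B (g i)" for i
  proof (cases "i < card K")
    case True
    then have "g i = (\<lambda>x. x $ kk i)" by (simp add: g_def[abs_def])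
    then show ?thesis by (simp add: continuous_intros)
  next
    case False
    then have "g i = (\<lambda>x. x $ fst (epair (cc (i - card K))) + \<sigma> (cc (i - card K)) * x $ snd (epair (cc (i - card K))))"
      by (simp add: g_def[abs_def])
    then show ?thesis by (simp add: continuous_intros)
  qed
  have o: "g i (- x) = - g i x" for i x by (simp add: g_def)
  have nz: "\<exists>i<m'. g i x \<noteq> 0" if "x \<in> B" for x
  proof -
    have "(\<exists>v\<in>K. x$v \<noteq> 0) \<or> (\<exists>e\<in>C. x$(fst (epair e)) + \<sigma> e * x$(snd (epair e)) \<noteq> 0)"
      using nex that by blast
    then show ?thesis
    proof
      assume "\<exists>v\<in>K. x$v \<noteq> 0"
      then obtain v where v: "v \<in> K" "x$v \<noteq> 0" by blast
      have "v \<in> kk ` {0..<card K}" using kk v by (simp add: bij_betw_def)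
      then obtain i where i: "i \<in> {0..<card K}" "kk i = v" by (rule imageE) (rule that, auto)
      then have "g i x \<noteq> 0" using v by (simp add: g_def)
      moreover have "i < m'" using i by (simp add: m'_def)
      ultimately show ?thesis by blast
    next
      assume "\<exists>e\<in>C. x$(fst (epair e)) + \<sigma> e * x$(snd (epair e)) \<noteq> 0"
      then obtain e where e: "e \<in> C" "x$(fst (epair e)) + \<sigma> e * x$(snd (epair e)) \<noteq> 0" by blast
      have "e \<in> cc ` {0..<card C}" using cc e by (simp add: bij_betw_def)
      then obtain j where j: "j \<in> {0..<card C}" "cc j = e" by (rule imageE) (rule that, auto)
      then have "g (card K + j) x \<noteq> 0" using e by (simp add: g_def)
      moreover have "card K + j < m'" using j by (simp add: m'_def)
      ultimately show ?thesis by blast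
    qed
  qed
  have H: "(\<forall>i<m'. continuous_on B (g i) \<and> (\<forall>x\<in>B. g i (- x) = - g i x))
         \<and> (\<forall>x\<in>B. \<exists>i<m'. g i x \<noteq> 0)" using c o nz by blast
  have "\<exists>g :: nat \<Rightarrow> real^'n \<Rightarrow> real. (\<forall>i<m'. continuous_on B (g i) \<and> (\<forall>x\<in>B. g i (- x) = - g i x))
         \<and> (\<forall>x\<in>B. \<exists>i<m'. g i x \<noteq> 0)" using H by (rule exI[of _ g])
  moreover have "m' < card C + card K + 1" by (simp add: m'_def)
  ultimately show False using gen unfolding genus_ge_def by blast
qed


lemma var_eig_lower:
  fixes E :: "('n::finite) set set"
  assumes edges: "is_edge_set E" and sig: "\<forall>e\<in>E. \<sigma> e = 1 \<or> \<sigma> e = -1"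
    and wpos: "\<forall>e\<in>E. w e > 0" and mupos: "\<forall>i. \<mu> i > 0"
    and cov: "edge_cover (UNIV - K) {e\<in>E. e \<subseteq> UNIV - K} C"
  shows "var_eig E \<sigma> w \<mu> \<kappa> p (card C + card K + 1)
     \<ge> ereal (2 powr p * (Min (w ` E) / (2 * Max (range \<mu>))) - (\<Sum>i\<in>UNIV. \<bar>\<kappa> i\<bar> / \<mu> i))"
  unfolding var_eig_def
proof (rule INF_greatest)
  fix B assume B: "B \<in> genus_family \<mu> p (card C + card K + 1)"
  then have gen: "genus_ge B (card C + card K + 1)" and sub: "B \<subseteq> p_sphere \<mu> p"
    by (auto simp: genus_family_def)
  obtain f where f: "f \<in> B" "\<forall>v\<in>K. f$v = 0" "\<forall>e\<in>C. f$(fst (epair e)) + \<sigma> e * f$(snd (epair e)) = 0"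
    using genus_point[OF gen, of \<sigma>] by blast
  have "rayleigh E \<sigma> w \<mu> \<kappa> p f \<ge> 2 powr p * (Min (w ` E) / (2 * Max (range \<mu>))) - (\<Sum>i\<in>UNIV. \<bar>\<kappa> i\<bar> / \<mu> i)"
    using lower_bound_point[OF edges sig wpos mupos cov _ f(2,3)] f(1) sub by blast
  then show "ereal (2 powr p * (Min (w ` E) / (2 * Max (range \<mu>))) - (\<Sum>i\<in>UNIV. \<bar>\<kappa> i\<bar> / \<mu> i))
     \<le> (SUP f\<in>B. ereal (rayleigh E \<sigma> w \<mu> \<kappa> p f))"
    using f(1) by (intro SUP_upper2[of f]) auto
qed

lemma var_eig_step:
  fixes E :: "('n::finite) set set"
  assumes sig: "\<forall>e\<in>E. \<sigma> e = 1 \<or> \<sigma> e = -1"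
    and wpos: "\<forall>e\<in>E. w e > 0" and mupos: "\<forall>i. \<mu> i > 0"
    and pq: "0 < p" "p \<le> q"
    and lt: "var_eig E \<sigma> w \<mu> \<kappa> p m < ereal t"
  shows "var_eig E \<sigma> w \<mu> \<kappa> q m \<le> ereal (2 powr (q - p) * t + (2 powr (q - p) - 1) * (\<Sum>i\<in>UNIV. \<bar>\<kappa> i\<bar> / \<mu> i))"
proof -
  define a where "a = 2 powr (q - p)"
  define M where "M = (\<Sum>i\<in>UNIV. \<bar>\<kappa> i\<bar> / \<mu> i)"
  have q: "q > 0" using pq by simp
  obtain B where B: "B \<in> genus_family \<mu> p m" and SB: "(SUP f\<in>B. ereal (rayleigh E \<sigma> w \<mu> \<kappa> p f)) < ereal t"
    using lt unfolding var_eig_def by (auto simp: INF_less_iff)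
  have sub: "B \<subseteq> p_sphere \<mu> p" using B by (auto simp: genus_family_def)
  have TB: "T (p/q) ` B \<in> genus_family \<mu> q m" using family_transport[OF pq(1) q B] .
  have "(SUP g\<in>T (p/q) ` B. ereal (rayleigh E \<sigma> w \<mu> \<kappa> q g)) \<le> ereal (a * t + (a - 1) * M)"
  proof (rule SUP_least)
    fix g assume "g \<in> T (p/q) ` B"
    then obtain f where f: "f \<in> B" "g = T (p/q) f" by blast
    have "ereal (rayleigh E \<sigma> w \<mu> \<kappa> p f) < ereal t" using SUP_lessD[OF SB f(1)] .
    then have Rt: "rayleigh E \<sigma> w \<mu> \<kappa> p f < t" by simp
    have "rayleigh E \<sigma> w \<mu> \<kappa> q g \<le> a * rayleigh E \<sigma> w \<mu> \<kappa> p f + (a - 1) * M"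
      using rayleigh_bound[OF sig wpos mupos pq, of f \<kappa>] f sub unfolding a_def M_def by auto
    also have "\<dots> \<le> a * t + (a - 1) * M" using Rt by (intro add_right_mono mult_left_mono) (auto simp: a_def)
    finally show "ereal (rayleigh E \<sigma> w \<mu> \<kappa> q g) \<le> ereal (a * t + (a - 1) * M)" by simp
  qed
  then show ?thesis unfolding var_eig_def a_def M_def
    using TB by (intro INF_lower2[of "T (p/q) ` B"]) auto
qed


lemma main_gen:
  fixes E :: "('n::finite) set set"
  assumes edges: "is_edge_set E" and sig: "\<forall>e\<in>E. \<sigma> e = 1 \<or> \<sigma> e = -1"
    and wpos: "\<forall>e\<in>E. w e > 0" and mupos: "\<forall>i. \<mu> i > 0"
    and cov: "edge_cover (UNIV - K) {e\<in>E. e \<subseteq> UNIV - K} C"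
  shows "cutoff_eig E \<sigma> w \<mu> \<kappa> (card C + card K + 1) \<ge> ereal (Min (w ` E) / (2 * Max (range \<mu>)))"
proof -
  define m where "m = card C + card K + 1"
  define V where "V p = var_eig E \<sigma> w \<mu> \<kappa> p m" for p
  define c0 where "c0 = Min (w ` E) / (2 * Max (range \<mu>))"
  define M where "M = (\<Sum>i\<in>UNIV. \<bar>\<kappa> i\<bar> / \<mu> i)"
  have low: "V p \<ge> ereal (2 powr p * c0 - M)" for p
    unfolding V_def m_def c0_def M_def using var_eig_lower[OF edges sig wpos mupos cov] .
  have step: "V q \<le> ereal (2 powr (q - p) * t + (2 powr (q - p) - 1) * M)"
    if "0 < p" "p \<le> q" "V p < ereal t" for p q t
    using var_eig_step[OF sig wpos mupos that(1,2)] that(3) unfolding V_def M_def by blast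
  define u where "u p = ereal (2 powr - p) * V p + ereal (2 powr - p * M)" for p
  have umono: "u q \<le> u p" if pq: "0 < p" "p \<le> q" for p q
  proof (cases "V p")
    case PInf
    then have "u p = \<infinity>" by (simp add: u_def)
    then show ?thesis by simp
  next
    case MInf
    then show ?thesis using low[of p] by simp
  next
    case (real r)
    define a where "a = 2 powr (q - p)"
    have apos: "a > 0" by (simp add: a_def)
    have "V q \<le> ereal (a * (r + 1) + (a - 1) * M)"
      using step[OF pq, of "r + 1"] real unfolding a_def by simp
    then obtain s where Vq: "V q = ereal s" using low[of q] by (cases "V q") auto
    have sb: "s \<le> a * r + (a - 1) * M"
    proof (rule field_le_epsilon)
      fix e :: real assume e: "0 < e"
      have "V q \<le> ereal (a * (r + e / a) + (a - 1) * M)"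
        using step[OF pq, of "r + e / a"] real e apos unfolding a_def by simp
      then have "s \<le> a * (r + e / a) + (a - 1) * M" using Vq by simp
      also have "a * (r + e / a) = a * r + e" using apos by (simp add: field_simps)
      finally show "s \<le> a * r + (a - 1) * M + e" by simp
    qed
    have aq: "2 powr - q * a = 2 powr - p" unfolding a_def by (simp add: powr_add[symmetric])
    have "2 powr - q * s \<le> 2 powr - q * (a * r + (a - 1) * M)"
      using sb by (intro mult_left_mono) auto
    also have "\<dots> = (2 powr - q * a) * r + (2 powr - q * a) * M - 2 powr - q * M"
      by (simp add: algebra_simps)
    also have "\<dots> = 2 powr - p * r + 2 powr - p * M - 2 powr - q * M" unfolding aq ..
    finally have "2 powr - q * s + 2 powr - q * M \<le> 2 powr - p * r + 2 powr - p * M" by simp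
    then show ?thesis unfolding u_def using real Vq by simp
  qed
  have ulow: "u p \<ge> ereal c0" for p
  proof (cases "V p")
    case PInf
    then have "u p = \<infinity>" by (simp add: u_def)
    then show ?thesis by simp
  next
    case MInf
    then show ?thesis using low[of p] by simp
  next
    case (real r)
    then have r: "r \<ge> 2 powr p * c0 - M" using low[of p] by simp
    have "2 powr - p * (2 powr p * c0 - M) + 2 powr - p * M = c0"
      by (simp add: algebra_simps powr_add[symmetric])
    moreover have "2 powr - p * (2 powr p * c0 - M) \<le> 2 powr - p * r"
      using r by (intro mult_left_mono) auto
    ultimately have "c0 \<le> 2 powr - p * r + 2 powr - p * M" by linarith
    then show ?thesis unfolding u_def using real by simp
  qed
  have hu: "ereal (2 powr - p) * V p = u p - ereal (2 powr - p * M)" for p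
    unfolding u_def by (cases "ereal (2 powr - p) * V p") auto
  define L where "L = (INF p\<in>{1..}. u p)"
  have Lc: "L \<ge> ereal c0" unfolding L_def by (rule INF_greatest) (rule ulow)
  have uL: "(u \<longlongrightarrow> L) at_top"
  proof (rule order_tendstoI)
    fix y assume "y < L"
    then have "\<forall>p\<ge>1. y < u p" unfolding L_def by (auto simp: less_INF_D)
    then show "eventually (\<lambda>p. y < u p) at_top" by (auto simp: eventually_at_top_linorder)
  next
    fix y assume "L < y"
    then obtain p0 where p0: "p0 \<in> {1..}" "u p0 < y" unfolding L_def by (auto simp: INF_less_iff)
    then have "\<forall>p\<ge>p0. u p < y" using umono[of p0] by (meson atLeast_iff le_less_trans less_le_trans zero_less_one)
    then show "eventually (\<lambda>p. u p < y) at_top" by (auto simp: eventually_at_top_linorder)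
  qed
  have z: "((\<lambda>p. ereal (2 powr - p * M)) \<longlongrightarrow> ereal 0) at_top"
    by (intro tendsto_ereal) real_asymp
  have "((\<lambda>p. u p - ereal (2 powr - p * M)) \<longlongrightarrow> L - ereal 0) at_top"
    by (rule tendsto_diff_ereal_general[OF uL z]) auto
  then have hL: "((\<lambda>p. ereal (2 powr - p) * V p) \<longlongrightarrow> L) at_top"
    unfolding hu by (simp add: zero_ereal_def[symmetric])
  have "cutoff_eig E \<sigma> w \<mu> \<kappa> m = L"
    unfolding cutoff_eig_def V_def[symmetric] by (rule tendsto_Lim[OF _ hL]) simp
  then show ?thesis using Lc unfolding m_def c0_def by simp
qed


theorem lemma6p5:
  fixes E :: "('n::finite) set set"
    and \<sigma> w :: "'n set \<Rightarrow> real"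
    and \<mu> \<kappa> :: "'n \<Rightarrow> real"
    and K :: "'n set" and k \<beta>' :: nat and C :: "'n set set"
  assumes "is_edge_set E"
    and "E \<noteq> {}"
    and "\<forall>e\<in>E. \<sigma> e = 1 \<or> \<sigma> e = -1"
    and "\<forall>e\<in>E. w e > 0"
    and "\<forall>i. \<mu> i > 0"
    and "card K = k"
    and "min_edge_cover (UNIV - K) {e\<in>E. e \<subseteq> UNIV - K} C"
    and "card C = \<beta>'"
  shows "cutoff_eig E \<sigma> w \<mu> \<kappa> (\<beta>' + k + 1)
           \<ge> ereal ((1/2) * (Min (w ` E) / Max (range \<mu>)))
         \<and> Min (w ` E) / Max (range \<mu>) > 0"
proof
  have cov: "edge_cover (UNIV - K) {e\<in>E. e \<subseteq> UNIV - K} C"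
    using assms(7) by (simp add: min_edge_cover_def)
  have "cutoff_eig E \<sigma> w \<mu> \<kappa> (card C + card K + 1) \<ge> ereal (Min (w ` E) / (2 * Max (range \<mu>)))"
    using main_gen[OF assms(1,3,4,5) cov] .
  then show "cutoff_eig E \<sigma> w \<mu> \<kappa> (\<beta>' + k + 1) \<ge> ereal ((1/2) * (Min (w ` E) / Max (range \<mu>)))"
    using assms(6,8) by simp
next
  have "0 < Min (w ` E)" using assms(2,4) by (subst Min_gr_iff) auto
  moreover have "\<mu> undefined \<le> Max (range \<mu>)" by (intro Max_ge) auto
  then have "0 < Max (range \<mu>)" using assms(5) by (meson less_le_trans)
  ultimately show "Min (w ` E) / Max (range \<mu>) > 0" by simp
qed

end
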